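(* Every filter $\mathcal{F}$ on $\omega$ (viewed as a subspace of $2^\omega$) is strongly homogeneous.
   Context: A filter on $\omega$ is $\mathcal{F}\subseteq\mathcal{P}(\omega)$ with $\varnothing\notin\mathcal{F}$, $\omega\in\mathcal{F}$, closed under finite modifications (if $x\in\mathcal{F}$ and $y$ differs from $x$ by a finite set then $y\in\mathcal{F}$), upward-closed, and closed under finite intersections; it is identified via characteristic functions with a subspace of $2^\omega$. A space $X$ is strongly homogeneous if every non-empty clopen subspace of $X$ is homeomorphic to $X$. *)

theory Defs
  imports "HOL-Analysis.Analysis"
begin

text \<open>A filter on omega (containing the Frechet filter, i.e. closed under finite modifications).\<close>
definition filter_on_omega :: "nat set set \<Rightarrow> bool" where
  "filter_on_omega F \<longleftrightarrow>
     {} \<notin> F \<and> UNIV \<in> F \<and>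
     (\<forall>x\<in>F. \<forall>y. finite ((x - y) \<union> (y - x)) \<longrightarrow> y \<in> F) \<and>
     (\<forall>x\<in>F. \<forall>y. x \<subseteq> y \<longrightarrow> y \<in> F) \<and>
     (\<forall>x\<in>F. \<forall>y\<in>F. x \<inter> y \<in> F)"

definition cantor_space :: "(nat \<Rightarrow> bool) topology" where
  "cantor_space = product_topology (\<lambda>_. discrete_topology (UNIV :: bool set)) UNIV"

definition char_fun :: "nat set \<Rightarrow> (nat \<Rightarrow> bool)" where
  "char_fun x = (\<lambda>n. n \<in> x)"

definition strongly_homogeneous :: "'a topology \<Rightarrow> bool" where
  "strongly_homogeneous X \<longleftrightarrow>
     (\<forall>U. U \<noteq> {} \<and> openin X U \<and> closedin X U \<longrightarrow> subtopology X U homeomorphic_space X)"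

end

theory Submission
  imports Defs "HOL-Library.Countable_Set"
begin

definition cyl :: "nat \<Rightarrow> (nat \<Rightarrow> bool) \<Rightarrow> (nat \<Rightarrow> bool) set" where
  "cyl n s = {f. \<forall>i<n. f i = s i}"

lemma topspace_cantor [simp]: "topspace cantor_space = UNIV"
  by (simp add: cantor_space_def)

lemma openin_cyl: "openin cantor_space (cyl n s)"
  unfolding cantor_space_def openin_product_topology_alt
proof (intro ballI)
  fix x assume x: "x \<in> cyl n s"
  define U where "U i = (if i < n then {s i} else UNIV)" for i
  have "{i \<in> UNIV. U i \<noteq> topspace (discrete_topology UNIV)} \<subseteq> {..<n}"
    by (auto simp: U_def)
  hence "finite {i \<in> UNIV. U i \<noteq> topspace (discrete_topology UNIV)}"
    using finite_subset by blast
  moreover have "x \<in> Pi\<^sub>E UNIV U" using x by (auto simp: U_def cyl_def)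
  moreover have "Pi\<^sub>E UNIV U \<subseteq> cyl n s" by (auto simp: U_def cyl_def PiE_iff) (metis singletonD)+
  ultimately show "\<exists>U. finite {i \<in> UNIV. U i \<noteq> topspace (discrete_topology UNIV)} \<and>
                 (\<forall>i \<in> UNIV. openin (discrete_topology UNIV) (U i)) \<and> x \<in> Pi\<^sub>E UNIV U \<and> Pi\<^sub>E UNIV U \<subseteq> cyl n s"
    by auto
qed

lemma open_cyl_sub:
  assumes "openin cantor_space W" "f \<in> W"
  shows "\<exists>n. cyl n f \<subseteq> W"
proof -
  obtain U where U: "finite {i \<in> UNIV. U i \<noteq> topspace (discrete_topology (UNIV::bool set))}"
    "f \<in> Pi\<^sub>E UNIV U" "Pi\<^sub>E UNIV U \<subseteq> W"
    using assms unfolding cantor_space_def openin_product_topology_alt by blast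
  then obtain n where n: "\<forall>i\<in>{i. U i \<noteq> UNIV}. i < n"
    using finite_nat_bounded by (metis (no_types, lifting) Collect_cong UNIV_I lessThan_iff subset_eq topspace_discrete_topology)
  have "cyl n f \<subseteq> Pi\<^sub>E UNIV U"
  proof
    fix g assume g: "g \<in> cyl n f"
    show "g \<in> Pi\<^sub>E UNIV U"
    proof (simp add: PiE_iff, intro allI)
      fix i show "g i \<in> U i"
      proof (cases "U i = UNIV")
        case False then have "i < n" using n by auto
        then show ?thesis using g U(2) by (auto simp: cyl_def PiE_iff)
      qed auto
    qed
  qed
  then show ?thesis using U(3) by blast
qed

lemma cont_cantor:
  assumes "\<And>i. (\<exists>c. \<forall>f. \<Phi> f i = c) \<or> (\<exists>j. \<forall>f. \<Phi> f i = f j)"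
  shows "continuous_map cantor_space cantor_space \<Phi>"
  unfolding cantor_space_def continuous_map_componentwise_UNIV
proof
  fix k
  from assms[of k] show "continuous_map (product_topology (\<lambda>_. discrete_topology UNIV) UNIV) (discrete_topology UNIV) (\<lambda>x. \<Phi> x k)"
  proof
    assume "\<exists>c. \<forall>f. \<Phi> f k = c" then obtain c where "\<And>f. \<Phi> f k = c" by blast
    then show ?thesis by simp
  next
    assume "\<exists>j. \<forall>f. \<Phi> f k = f j" then obtain j where "\<And>f. \<Phi> f k = f j" by blast
    then show ?thesis using continuous_map_product_projection[of j UNIV "\<lambda>_. discrete_topology UNIV"] by simp
  qed
qed


lemma fm:
  assumes "filter_on_omega F" "finite ((x - y) \<union> (y - x))"
  shows "x \<in> F \<longleftrightarrow> y \<in> F"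
proof -
  have "finite ((y - x) \<union> (x - y))" using assms(2) by (simp add: Un_commute)
  then show ?thesis using assms unfolding filter_on_omega_def by blast
qed

lemma inter_mem:
  assumes "filter_on_omega F" "A \<in> F"
  shows "x \<in> F \<longleftrightarrow> x \<inter> A \<in> F"
  using assms unfolding filter_on_omega_def by (metis Int_lower1)

lemma infinite_bij:
  fixes P Q :: "nat set"
  assumes "infinite P" "infinite Q"
  shows "\<exists>h. bij_betw h P Q"
proof -
  have a: "bij_betw (from_nat_into P) UNIV P" by (rule bij_betw_from_nat_into) (auto simp: assms)
  have b: "bij_betw (from_nat_into Q) UNIV Q" by (rule bij_betw_from_nat_into) (auto simp: assms)
  have "bij_betw (inv_into UNIV (from_nat_into P)) P UNIV"
    using a bij_betw_inv_into by blast
  then show ?thesis using b bij_betw_trans by blast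
qed

lemma beta_exists:
  assumes F: "filter_on_omega F"
  shows "\<exists>\<beta>. bij_betw \<beta> UNIV {n..} \<and> (\<forall>x. \<beta> ` x \<in> F \<longleftrightarrow> x \<in> F)"
proof (cases "\<exists>A\<in>F. infinite (- A)")
  case True
  then obtain A where A: "A \<in> F" "infinite (- A)" by blast
  define A' where "A' = A - {..<n}"
  have "finite ((A - A') \<union> (A' - A))" by (auto simp: A'_def intro: finite_subset[of _ "{..<n}"])
  hence A'F: "A' \<in> F" using fm[OF F] A by blast
  have inf1: "infinite (- A')" using A(2) by (auto simp: A'_def intro: infinite_super)
  have "- A' - {..<n} \<subseteq> {n..} - A'" by auto
  moreover have "infinite (- A' - {..<n})" using inf1 by simp
  ultimately have inf2: "infinite ({n..} - A')" using infinite_super by blast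
  obtain h where h: "bij_betw h (- A') ({n..} - A')" using infinite_bij[OF inf1 inf2] by blast
  have A'n: "A' \<subseteq> {n..}" by (auto simp: A'_def)
  define \<beta> where "\<beta> = (\<lambda>i. if i \<in> A' then i else h i)"
  have "bij_betw \<beta> (A' \<union> - A') (A' \<union> ({n..} - A'))"
    unfolding \<beta>_def by (rule bij_betw_disjoint_Un[OF bij_betw_id[unfolded id_def] h]) auto
  moreover have "A' \<union> ({n..} - A') = {n..}" using A'n by auto
  ultimately have bij: "bij_betw \<beta> UNIV {n..}" by simp
  have key: "\<beta> ` x \<inter> A' = x \<inter> A'" for x
  proof -
    have "h i \<notin> A'" if "i \<notin> A'" for i using h that by (auto simp: bij_betw_def)
    show ?thesis
    proof (rule set_eqI, rule iffI)
      fix y assume "y \<in> \<beta> ` x \<inter> A'"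
      then obtain i where i: "i \<in> x" "y = \<beta> i" "y \<in> A'" by blast
      show "y \<in> x \<inter> A'"
      proof (cases "i \<in> A'")
        case True then show ?thesis using i by (simp add: \<beta>_def)
      next
        case False then have "y = h i" using i by (simp add: \<beta>_def)
        then show ?thesis using False i \<open>\<And>i. i \<notin> A' \<Longrightarrow> h i \<notin> A'\<close> by blast
      qed
    next
      fix y assume "y \<in> x \<inter> A'"
      then have "\<beta> y = y" by (simp add: \<beta>_def)
      then show "y \<in> \<beta> ` x \<inter> A'" using \<open>y \<in> x \<inter> A'\<close> by (metis IntD1 IntD2 IntI imageI)
    qed
  qed
  have "\<beta> ` x \<in> F \<longleftrightarrow> x \<in> F" for x
    using inter_mem[OF F A'F, of x] inter_mem[OF F A'F, of "\<beta> ` x"] key[of x] by simp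
  then show ?thesis using bij by blast
next
  case False
  have cof: "x \<in> F \<longleftrightarrow> finite (- x)" for x
  proof
    assume "x \<in> F" then show "finite (- x)" using False by blast
  next
    assume fx: "finite (- x)"
    have "UNIV \<in> F" using F unfolding filter_on_omega_def by blast
    moreover have "(UNIV - x) \<union> (x - UNIV) = - x" by auto
    ultimately show "x \<in> F" using fx F unfolding filter_on_omega_def by metis
  qed
  define \<beta> where "\<beta> = (\<lambda>i::nat. i + n)"
  have inj: "inj \<beta>" by (simp add: \<beta>_def inj_on_def)
  have mem\<beta>: "i \<in> \<beta> ` y \<longleftrightarrow> n \<le> i \<and> i - n \<in> y" for i y
  proof
    assume "i \<in> \<beta> ` y" then show "n \<le> i \<and> i - n \<in> y" by (auto simp: \<beta>_def)
  next
    assume a: "n \<le> i \<and> i - n \<in> y"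
    then have "i = \<beta> (i - n)" by (simp add: \<beta>_def)
    then show "i \<in> \<beta> ` y" using a by blast
  qed
  have "range \<beta> = {n..}" using mem\<beta>[of _ UNIV] by auto
  then have bij: "bij_betw \<beta> UNIV {n..}" using inj by (simp add: bij_betw_def)
  have "- (\<beta> ` x) = {..<n} \<union> \<beta> ` (- x)" for x
    using mem\<beta>[of _ x] mem\<beta>[of _ "-x"] by (auto simp: \<beta>_def)
  moreover have "finite (\<beta> ` y) \<longleftrightarrow> finite y" for y
    using bij unfolding bij_betw_def by (meson finite_imageI finite_image_iff inj_on_subset subset_UNIV)
  ultimately have "\<beta> ` x \<in> F \<longleftrightarrow> x \<in> F" for x using cof by simp
  then show ?thesis using bij by blast
qed


lemma mem_cF: "f \<in> char_fun ` F \<longleftrightarrow> Collect f \<in> F"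
proof
  assume "f \<in> char_fun ` F" then show "Collect f \<in> F" by (auto simp: char_fun_def)
next
  assume "Collect f \<in> F"
  moreover have "f = char_fun (Collect f)" by (simp add: char_fun_def)
  ultimately show "f \<in> char_fun ` F" by blast
qed

lemma piece_homeo:
  assumes F: "filter_on_omega F"
  shows "subtopology cantor_space (char_fun ` F \<inter> cyl n \<sigma>) homeomorphic_space subtopology cantor_space (char_fun ` F)"
proof -
  obtain \<beta> where bij: "bij_betw \<beta> UNIV {n..}" and mem: "\<And>x. \<beta> ` x \<in> F \<longleftrightarrow> x \<in> F"
    using beta_exists[OF F, of n] by blast
  define \<gamma> where "\<gamma> = inv_into UNIV \<beta>"
  have inj: "inj \<beta>" and rng: "range \<beta> = {n..}" using bij by (auto simp: bij_betw_def)
  have \<gamma>\<beta>: "\<gamma> (\<beta> j) = j" for j using inj by (simp add: \<gamma>_def)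
  have \<beta>\<gamma>: "n \<le> i \<Longrightarrow> \<beta> (\<gamma> i) = i" for i using rng by (simp add: \<gamma>_def f_inv_into_f)
  have \<beta>ge: "n \<le> \<beta> j" for j using rng by auto
  define \<Phi> where "\<Phi> f = (\<lambda>i. if i < n then \<sigma> i else f (\<gamma> i))" for f :: "nat \<Rightarrow> bool"
  define \<Psi> where "\<Psi> g = (\<lambda>j. g (\<beta> j))" for g :: "nat \<Rightarrow> bool"
  have c\<Phi>: "continuous_map cantor_space cantor_space \<Phi>"
  proof (rule cont_cantor)
    fix i show "(\<exists>c. \<forall>f. \<Phi> f i = c) \<or> (\<exists>j. \<forall>f. \<Phi> f i = f j)"
      by (cases "i < n") (auto simp: \<Phi>_def)
  qed
  have c\<Psi>: "continuous_map cantor_space cantor_space \<Psi>"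
    by (rule cont_cantor) (auto simp: \<Psi>_def)
  let ?S = "{i. i < n \<and> \<sigma> i}"
  have col\<Phi>: "Collect (\<Phi> f) = ?S \<union> \<beta> ` Collect f" for f
  proof (rule set_eqI)
    fix i show "i \<in> Collect (\<Phi> f) \<longleftrightarrow> i \<in> ?S \<union> \<beta> ` Collect f"
    proof (cases "i < n")
      case True then show ?thesis using \<beta>ge by (auto simp: \<Phi>_def) (meson leD)
    next
      case False
      then have "i \<in> \<beta> ` Collect f \<longleftrightarrow> f (\<gamma> i)"
        using \<beta>\<gamma>[of i] \<gamma>\<beta> by (auto simp: image_iff)
      then show ?thesis using False by (auto simp: \<Phi>_def)
    qed
  qed
  have mem\<Phi>: "\<Phi> f \<in> char_fun ` F \<longleftrightarrow> f \<in> char_fun ` F" for f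
  proof -
    have "finite ((Collect (\<Phi> f) - \<beta> ` Collect f) \<union> (\<beta> ` Collect f - Collect (\<Phi> f)))"
      unfolding col\<Phi> by (rule finite_subset[of _ "{..<n}"]) auto
    then show ?thesis unfolding mem_cF using fm[OF F] mem by blast
  qed
  have cyl\<Phi>: "\<Phi> f \<in> cyl n \<sigma>" for f by (simp add: \<Phi>_def cyl_def)
  have mem\<Psi>: "\<Psi> g \<in> char_fun ` F \<longleftrightarrow> g \<in> char_fun ` F" for g
  proof -
    have c1: "Collect (\<Psi> g) = \<beta> -` Collect g" by (auto simp: \<Psi>_def)
    have c2: "\<beta> ` (\<beta> -` Collect g) = Collect g \<inter> {n..}" using rng by auto
    have "finite ((Collect g \<inter> {n..} - Collect g) \<union> (Collect g - Collect g \<inter> {n..}))"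
      by (rule finite_subset[of _ "{..<n}"]) auto
    then have "Collect g \<inter> {n..} \<in> F \<longleftrightarrow> Collect g \<in> F" using fm[OF F] by blast
    then show ?thesis unfolding mem_cF c1 using mem[of "\<beta> -` Collect g"] c2 by simp
  qed
  have "homeomorphic_maps (subtopology cantor_space (char_fun ` F))
          (subtopology cantor_space (char_fun ` F \<inter> cyl n \<sigma>)) \<Phi> \<Psi>"
    unfolding homeomorphic_maps_def
  proof (intro conjI)
    show "continuous_map (subtopology cantor_space (char_fun ` F))
          (subtopology cantor_space (char_fun ` F \<inter> cyl n \<sigma>)) \<Phi>"
      using c\<Phi> mem\<Phi> cyl\<Phi> by (auto simp: continuous_map_in_subtopology continuous_map_from_subtopology)
    show "continuous_map (subtopology cantor_space (char_fun ` F \<inter> cyl n \<sigma>))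
          (subtopology cantor_space (char_fun ` F)) \<Psi>"
      using c\<Psi> mem\<Psi> by (auto simp: continuous_map_in_subtopology continuous_map_from_subtopology)
    show "\<forall>x\<in>topspace (subtopology cantor_space (char_fun ` F)). \<Psi> (\<Phi> x) = x"
      using \<beta>ge \<gamma>\<beta> by (auto simp: \<Phi>_def \<Psi>_def not_less[symmetric])
    show "\<forall>y\<in>topspace (subtopology cantor_space (char_fun ` F \<inter> cyl n \<sigma>)). \<Phi> (\<Psi> y) = y"
      using \<beta>\<gamma> by (auto simp: \<Phi>_def \<Psi>_def cyl_def not_less)
  qed
  then show ?thesis using homeomorphic_space_def homeomorphic_space_sym by blast
qed


lemma glue:
  assumes oU: "\<And>i. i \<in> I \<Longrightarrow> openin X (U i)" and oV: "\<And>i. i \<in> I \<Longrightarrow> openin Y (V i)"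
    and dU: "\<And>i j. i \<in> I \<Longrightarrow> j \<in> I \<Longrightarrow> i \<noteq> j \<Longrightarrow> U i \<inter> U j = {}"
    and dV: "\<And>i j. i \<in> I \<Longrightarrow> j \<in> I \<Longrightarrow> i \<noteq> j \<Longrightarrow> V i \<inter> V j = {}"
    and cU: "(\<Union>i\<in>I. U i) = topspace X" and cV: "(\<Union>i\<in>I. V i) = topspace Y"
    and h: "\<And>i. i \<in> I \<Longrightarrow> subtopology X (U i) homeomorphic_space subtopology Y (V i)"
  shows "X homeomorphic_space Y"
proof -
  have "\<forall>i\<in>I. \<exists>p. homeomorphic_maps (subtopology X (U i)) (subtopology Y (V i)) (fst p) (snd p)"
    using h unfolding homeomorphic_space_def by fastforce
  then obtain p where p: "\<And>i. i \<in> I \<Longrightarrow> homeomorphic_maps (subtopology X (U i)) (subtopology Y (V i)) (fst (p i)) (snd (p i))"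
    by metis
  define f where "f i = fst (p i)" for i
  define g where "g i = snd (p i)" for i
  have hm: "\<And>i. i \<in> I \<Longrightarrow> homeomorphic_maps (subtopology X (U i)) (subtopology Y (V i)) (f i) (g i)"
    using p by (simp add: f_def g_def)
  define ix where "ix x = (SOME i. i \<in> I \<and> x \<in> U i)" for x
  define iy where "iy y = (SOME i. i \<in> I \<and> y \<in> V i)" for y
  have ix: "ix x \<in> I \<and> x \<in> U (ix x)" if "x \<in> topspace X" for x
    unfolding ix_def by (rule someI_ex) (use that cU in blast)
  have ixu: "ix x = i" if "i \<in> I" "x \<in> U i" for x i
    using ix[of x] that dU cU by blast
  have iy: "iy x \<in> I \<and> x \<in> V (iy x)" if "x \<in> topspace Y" for x
    unfolding iy_def by (rule someI_ex) (use that cV in blast)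
  have iyu: "iy x = i" if "i \<in> I" "x \<in> V i" for x i
    using iy[of x] that dV cV by blast
  have UX: "U i \<subseteq> topspace X" if "i \<in> I" for i using cU that by blast
  have VY: "V i \<subseteq> topspace Y" if "i \<in> I" for i using cV that by blast
  have fmap: "f i x \<in> V i" "g i (f i x) = x" if "i \<in> I" "x \<in> U i" for i x
    using hm[OF that(1)] that UX[OF that(1)]
    unfolding homeomorphic_maps_def continuous_map_def by auto
  have gmap: "g i y \<in> U i" "f i (g i y) = y" if "i \<in> I" "y \<in> V i" for i y
    using hm[OF that(1)] that VY[OF that(1)]
    unfolding homeomorphic_maps_def continuous_map_def by auto
  define F' where "F' x = f (ix x) x" for x
  define G' where "G' y = g (iy y) y" for y
  have "homeomorphic_maps X Y F' G'"
    unfolding homeomorphic_maps_def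
  proof (intro conjI ballI)
    show "continuous_map X Y F'"
    proof (rule pasting_lemma[where T=U and f=f and I=I])
      fix i assume i: "i \<in> I"
      then show "openin X (U i)" by (rule oU)
      show "continuous_map (subtopology X (U i)) Y (f i)"
        using hm[OF i] unfolding homeomorphic_maps_def using continuous_map_into_fulltopology by blast
    next
      fix i j x assume "i \<in> I" "j \<in> I" "x \<in> topspace X \<inter> U i \<inter> U j"
      then show "f i x = f j x" using dU by blast
    next
      fix x assume "x \<in> topspace X" then show "\<exists>j. j \<in> I \<and> x \<in> U j \<and> F' x = f j x"
        using ix by (auto simp: F'_def)
    qed
    show "continuous_map Y X G'"
    proof (rule pasting_lemma[where T=V and f=g and I=I])
      fix i assume i: "i \<in> I"
      then show "openin Y (V i)" by (rule oV)
      show "continuous_map (subtopology Y (V i)) X (g i)"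
        using hm[OF i] unfolding homeomorphic_maps_def using continuous_map_into_fulltopology by blast
    next
      fix i j x assume "i \<in> I" "j \<in> I" "x \<in> topspace Y \<inter> V i \<inter> V j"
      then show "g i x = g j x" using dV by blast
    next
      fix x assume "x \<in> topspace Y" then show "\<exists>j. j \<in> I \<and> x \<in> V j \<and> G' x = g j x"
        using iy by (auto simp: G'_def)
    qed
  next
    fix x assume x: "x \<in> topspace X"
    then have "F' x \<in> V (ix x)" using ix fmap by (simp add: F'_def)
    then have "iy (F' x) = ix x" using iyu ix x by blast
    then show "G' (F' x) = x" using x ix fmap by (simp add: G'_def F'_def)
  next
    fix y assume y: "y \<in> topspace Y"
    then have "G' y \<in> U (iy y)" using iy gmap by (simp add: G'_def)
    then have "ix (G' y) = iy y" using ixu iy y by blast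
    then show "F' (G' y) = y" using y iy gmap by (simp add: G'_def F'_def)
  qed
  then show ?thesis unfolding homeomorphic_space_def by blast
qed


definition Dpiece :: "nat set \<Rightarrow> nat \<Rightarrow> (nat \<Rightarrow> bool) set" where
  "Dpiece I j = (if Suc j \<in> I then cyl (Suc j) (\<lambda>i. i = j) else cyl j (\<lambda>_. False))"

lemma Dpiece_disj:
  assumes I: "(I = {..<k} \<and> 0 < k) \<or> I = UNIV" and ij: "i \<in> I" "j \<in> I" "i \<noteq> j"
  shows "Dpiece I i \<inter> Dpiece I j = {}"
proof -
  have *: "Dpiece I a \<inter> Dpiece I b = {}" if "a < b" "b \<in> I" for a b
  proof -
    have "Suc a \<in> I" using I that by auto
    then have "Dpiece I a \<subseteq> {g. g a}" by (auto simp: Dpiece_def cyl_def)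
    moreover have "Dpiece I b \<subseteq> {g. \<not> g a}" using that(1) by (auto simp: Dpiece_def cyl_def)
    ultimately show ?thesis by blast
  qed
  show ?thesis
  proof (cases "i < j")
    case True then show ?thesis using * ij by blast
  next
    case False then have "j < i" using ij by auto
    then show ?thesis using * ij by blast
  qed
qed

lemma Dpiece_cover:
  assumes I: "(I = {..<k} \<and> 0 < k) \<or> I = UNIV" and g: "\<exists>i. g i"
  shows "\<exists>j\<in>I. g \<in> Dpiece I j"
proof -
  define m where "m = (LEAST i. g i)"
  have gm: "g m" using g unfolding m_def by (rule LeastI_ex)
  have lt: "\<not> g i" if "i < m" for i using that not_less_Least unfolding m_def by blast
  show ?thesis
  proof (cases "m \<in> I")
    case True
    then show ?thesis
    proof (cases "Suc m \<in> I")
      case True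
      then have "g \<in> Dpiece I m" using gm lt by (auto simp: Dpiece_def cyl_def) (metis less_Suc_eq)
      then show ?thesis using \<open>m \<in> I\<close> by blast
    next
      case False
      then have "g \<in> Dpiece I m" using lt by (auto simp: Dpiece_def cyl_def)
      then show ?thesis using \<open>m \<in> I\<close> by blast
    qed
  next
    case False
    then have Ik: "I = {..<k}" "0 < k" "k \<le> m" using I by auto
    then have "g \<in> Dpiece I (k - 1)" using lt by (auto simp: Dpiece_def cyl_def)
    moreover have "k - 1 \<in> I" using Ik by auto
    ultimately show ?thesis by blast
  qed
qed


lemma cyl_eq: "(\<And>i. i < k \<Longrightarrow> h i = g i) \<Longrightarrow> m \<le> k \<Longrightarrow> cyl m h = cyl m g"
  by (auto simp: cyl_def)

lemma open_homeo:
  assumes F: "filter_on_omega F" and ne: "U \<noteq> {}"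
    and oU: "openin (subtopology cantor_space (char_fun ` F)) U"
  shows "subtopology cantor_space U homeomorphic_space subtopology cantor_space (char_fun ` F)"
proof -
  let ?cF = "char_fun ` F"
  obtain W where W: "openin cantor_space W" "U = W \<inter> ?cF" using oU openin_subtopology by metis
  have UcF: "U \<subseteq> ?cF" using W by blast
  have ex: "\<exists>m. ?cF \<inter> cyl m g \<subseteq> U" if "g \<in> U" for g
    using open_cyl_sub[OF W(1), of g] that W(2) by blast
  define N where "N g = (LEAST m. ?cF \<inter> cyl m g \<subseteq> U)" for g
  define piece where "piece g = ?cF \<inter> cyl (N g) g" for g
  have Nsub: "?cF \<inter> cyl (N g) g \<subseteq> U" if "g \<in> U" for g
    unfolding N_def using ex[OF that] by (rule LeastI_ex)
  have Nlt: "\<not> ?cF \<inter> cyl m g \<subseteq> U" if "m < N g" for g m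
    using that not_less_Least unfolding N_def by blast
  have p1: "g \<in> piece g" "piece g \<subseteq> U" if "g \<in> U" for g
    using that Nsub[OF that] UcF by (auto simp: piece_def cyl_def)
  have p2: "piece h = piece g" if "g \<in> U" "h \<in> piece g" for g h
  proof -
    have agree: "\<And>i. i < N g \<Longrightarrow> h i = g i" using that(2) by (auto simp: piece_def cyl_def)
    have ceq: "cyl m h = cyl m g" if "m \<le> N g" for m using agree that by (auto simp: cyl_def)
    have "N h = N g" unfolding N_def[of h]
    proof (rule Least_equality)
      have e1: "cyl (N g) h = cyl (N g) g" using ceq[of "N g"] by simp
      show "?cF \<inter> cyl (N g) h \<subseteq> U" unfolding e1 using Nsub[OF that(1)] .
      fix m assume m: "?cF \<inter> cyl m h \<subseteq> U"
      show "N g \<le> m"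
      proof (rule ccontr)
        assume "\<not> N g \<le> m"
        then have lt: "m < N g" by simp
        then have "cyl m h = cyl m g" using ceq[of m] by simp
        then show False using Nlt[OF lt] m by simp
      qed
    qed
    moreover have "cyl (N g) h = cyl (N g) g" using ceq[of "N g"] by simp
    ultimately show ?thesis unfolding piece_def by simp
  qed
  define M where "M = piece ` U"
  have Mdisj: "P \<inter> Q = {}" if PQ: "P \<in> M" "Q \<in> M" "P \<noteq> Q" for P Q
  proof (rule ccontr)
    assume "P \<inter> Q \<noteq> {}"
    then obtain x where x: "x \<in> P" "x \<in> Q" by blast
    obtain g h where gh: "g \<in> U" "P = piece g" "h \<in> U" "Q = piece h" using PQ unfolding M_def by blast
    have "piece x = P" using p2 gh x by blast
    moreover have "piece x = Q" using p2 gh x by blast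
    ultimately show False using PQ by simp
  qed
  have Mcov: "\<Union>M = U" using p1 unfolding M_def by blast
  have Mne: "M \<noteq> {}" using ne unfolding M_def by blast
  have Mform: "\<exists>n \<sigma>. P = ?cF \<inter> cyl n \<sigma>" if "P \<in> M" for P using that unfolding M_def piece_def by blast
  have Mcount: "countable M"
  proof -
    have "M \<subseteq> (\<lambda>(m, s). ?cF \<inter> cyl m (\<lambda>i. i \<in> s)) ` (UNIV \<times> Collect finite)"
    proof
      fix P assume "P \<in> M"
      then obtain g where g: "P = ?cF \<inter> cyl (N g) g" unfolding M_def piece_def by blast
      have "cyl (N g) g = cyl (N g) (\<lambda>i. i \<in> {j. j < N g \<and> g j})" by (auto simp: cyl_def)
      then have "P = (\<lambda>(m, s). ?cF \<inter> cyl m (\<lambda>i. i \<in> s)) (N g, {j. j < N g \<and> g j})" using g by simp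
      moreover have "(N g, {j. j < N g \<and> g j}) \<in> UNIV \<times> Collect finite" by simp
      ultimately show "P \<in> (\<lambda>(m, s). ?cF \<inter> cyl m (\<lambda>i. i \<in> s)) ` (UNIV \<times> Collect finite)" by blast
    qed
    moreover have "countable ((UNIV :: nat set) \<times> Collect (finite :: nat set \<Rightarrow> bool))"
      using countable_Collect_finite by (intro countable_SIGMA) (auto intro: countableI_type)
    ultimately show ?thesis by (meson countable_image countable_subset)
  qed
  obtain I k e where I: "((I::nat set) = {..<k} \<and> 0 < k) \<or> I = UNIV" and e: "bij_betw e I M"
  proof (cases "finite M")
    case True
    then have "bij_betw (from_nat_into M) {..<card M} M" by (rule bij_betw_from_nat_into_finite)
    moreover have "0 < card M" using True Mne by (simp add: card_gt_0_iff)
    ultimately show ?thesis using that[of "{..<card M}" "card M" "from_nat_into M"] by blast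
  next
    case False
    then have "bij_betw (from_nat_into M) UNIV M" using Mcount by (simp add: bij_betw_from_nat_into)
    then show ?thesis using that[of UNIV 0 "from_nat_into M"] by blast
  qed
  have piece_F: "subtopology cantor_space P homeomorphic_space subtopology cantor_space ?cF" if "P \<in> M" for P
    using Mform[OF that] piece_homeo[OF F] by metis
  show ?thesis
  proof (rule glue[where I=I and U=e and V="\<lambda>j. ?cF \<inter> Dpiece I j"])
    fix i assume i: "i \<in> I"
    then have eM: "e i \<in> M" using e by (auto simp: bij_betw_def)
    then have "e i \<subseteq> U" using Mcov by blast
    then obtain n \<sigma> where ns: "e i = ?cF \<inter> cyl n \<sigma>" using Mform eM by blast
    then have "e i = cyl n \<sigma> \<inter> U" using \<open>e i \<subseteq> U\<close> UcF by blast
    then show "openin (subtopology cantor_space U) (e i)"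
      using openin_cyl openin_subtopology by blast
    have "openin cantor_space (Dpiece I i)" by (simp add: Dpiece_def openin_cyl)
    then show "openin (subtopology cantor_space ?cF) (?cF \<inter> Dpiece I i)"
      using openin_subtopology by (metis inf_commute)
    have "subtopology (subtopology cantor_space U) (e i) = subtopology cantor_space (e i)"
      using \<open>e i \<subseteq> U\<close> by (simp add: subtopology_subtopology Int_absorb1)
    moreover have "subtopology cantor_space (?cF \<inter> Dpiece I i) homeomorphic_space subtopology cantor_space ?cF"
      unfolding Dpiece_def by (simp add: piece_homeo[OF F])
    moreover have "subtopology (subtopology cantor_space ?cF) (?cF \<inter> Dpiece I i) = subtopology cantor_space (?cF \<inter> Dpiece I i)"
      by (simp add: subtopology_subtopology)
    ultimately show "subtopology (subtopology cantor_space U) (e i) homeomorphic_space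
        subtopology (subtopology cantor_space ?cF) (?cF \<inter> Dpiece I i)"
      using piece_F[OF eM] homeomorphic_space_sym homeomorphic_space_trans by metis
  next
    fix i j assume ij: "i \<in> I" "j \<in> I" "i \<noteq> j"
    then have "e i \<noteq> e j" "e i \<in> M" "e j \<in> M" using e by (auto simp: bij_betw_def inj_on_def)
    then show "e i \<inter> e j = {}" using Mdisj by blast
  next
    fix i j assume "i \<in> I" "j \<in> I" "i \<noteq> j"
    then show "(?cF \<inter> Dpiece I i) \<inter> (?cF \<inter> Dpiece I j) = {}" using Dpiece_disj[OF I] by blast
  next
    show "(\<Union>i\<in>I. e i) = topspace (subtopology cantor_space U)"
      using e Mcov by (auto simp: bij_betw_def)
  next
    have "\<exists>j\<in>I. g \<in> Dpiece I j" if "g \<in> ?cF" for g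
    proof (rule Dpiece_cover[OF I])
      have "Collect g \<in> F" using that mem_cF by blast
      then have "Collect g \<noteq> {}" using F unfolding filter_on_omega_def by metis
      then show "\<exists>i. g i" by auto
    qed
    then show "(\<Union>i\<in>I. ?cF \<inter> Dpiece I i) = topspace (subtopology cantor_space ?cF)" by auto
  qed
qed

theorem proposition13p3:
  fixes F :: "nat set set"
  assumes "filter_on_omega F"
  shows "strongly_homogeneous (subtopology cantor_space (char_fun ` F))"
  unfolding strongly_homogeneous_def
proof (intro allI impI, elim conjE)
  fix U assume "U \<noteq> {}" "openin (subtopology cantor_space (char_fun ` F)) U"
  moreover then have "U \<subseteq> char_fun ` F" using openin_subset by fastforce
  ultimately show "subtopology (subtopology cantor_space (char_fun ` F)) U homeomorphic_space
        subtopology cantor_space (char_fun ` F)"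
    using open_homeo[OF assms] by (simp add: subtopology_subtopology Int_absorb1)
qed

end
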